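(* Let $\sigma$ be a nonempty finite sequence of nonnegative integers avoiding both $010$ and $110$. Let $q$ be the largest value occurring at least twice in $\sigma$, or $q=0$ if there is none, and let $r$ be the number of distinct values of $\sigma$ that are $\geqslant q$. Then $\mathrm{forb}(\sigma,\{010,110\})=q+r$.
   Context: A sequence contains a pattern $p$ if some subsequence is order-isomorphic to $p$; otherwise it avoids $p$. Avoiding $010$: no $i<j<l$ with $\sigma_i=\sigma_l<\sigma_j$. Avoiding $110$: no $i<j<l$ with $\sigma_i=\sigma_j>\sigma_l$. For a sequence $\sigma$ avoiding a set of patterns $P$, a value $v\in\{0,\dots,\max(\sigma)\}$ is forbidden if the sequence $\sigma$ followed by $M$ and then $v$ contains some pattern of $P$, where $M>\max(\sigma)$; $\mathrm{forb}(\sigma,P)$ is the number of forbidden values. *)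

theory Defs
  imports Main "HOL-Library.Sublist"
begin

definition order_iso :: "nat list \<Rightarrow> nat list \<Rightarrow> bool" where
  "order_iso a b \<longleftrightarrow> length a = length b \<and>
     (\<forall>i<length a. \<forall>j<length a. (a ! i < a ! j \<longleftrightarrow> b ! i < b ! j))"

definition contains :: "nat list \<Rightarrow> nat list \<Rightarrow> bool" where
  "contains s p \<longleftrightarrow> (\<exists>t. subseq t s \<and> order_iso t p)"

definition avoids :: "nat list \<Rightarrow> nat list set \<Rightarrow> bool" where
  "avoids s P \<longleftrightarrow> (\<forall>p\<in>P. \<not> contains s p)"

text \<open>Forbidden values: v in {0..max s} such that s followed by M and then v
  contains some pattern of P, with M > max s (we take M = max s + 1;
  containment only depends on relative order, so the choice is irrelevant).\<close>
definition forbidden :: "nat list \<Rightarrow> nat list set \<Rightarrow> nat set" where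
  "forbidden s P = {v. v \<le> Max (set s) \<and>
      (\<exists>p\<in>P. contains (s @ [Suc (Max (set s)), v]) p)}"

definition forb :: "nat list \<Rightarrow> nat list set \<Rightarrow> nat" where
  "forb s P = card (forbidden s P)"

definition max_repeated :: "nat list \<Rightarrow> nat" where
  "max_repeated s = (if \<exists>v. count_list s v \<ge> 2
      then Max {v. count_list s v \<ge> 2} else 0)"

end

theory Submission
  imports Defs
begin
lemma All3: "(\<forall>i<length [a,b,c::nat]. P i) = (P 0 \<and> P 1 \<and> P 2)"
  by (auto simp: less_Suc_eq numeral_2_eq_2)
lemma iso010: "order_iso [a,b,c] [0,1,0] \<longleftrightarrow> a = c \<and> a < b"
  unfolding order_iso_def All3 by auto
lemma iso110: "order_iso [a,b,c] [1,1,0] \<longleftrightarrow> a = b \<and> c < a"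
  unfolding order_iso_def All3 by auto
lemma subseq_set: "subseq xs ys \<Longrightarrow> set xs \<subseteq> set ys"
  by (induction rule: list_emb.induct) auto

lemma iso_len: "order_iso t p \<Longrightarrow> length t = length p"
  unfolding order_iso_def by simp
lemma subseq1: "subseq xs [x] \<Longrightarrow> xs=[] \<or> xs=[x]"
  by (cases xs) (auto split: if_splits)
lemma subseq2: "subseq xs [x,y] \<Longrightarrow> xs=[] \<or> xs=[x] \<or> xs=[y] \<or> xs=[x,y]"
proof -
  assume "subseq xs [x,y]"
  then obtain xs1 xs2 where "xs = xs1@xs2" "subseq xs1 [x]" "subseq xs2 [y]"
    using subseq_append_iff[of xs "[x]" "[y]"] by auto
  thus ?thesis using subseq1[of xs1 x] subseq1[of xs2 y] by auto
qed
lemma rep_subseq: "count_list xs w \<ge> 2 \<longleftrightarrow> subseq [w,w] xs"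
proof (induction xs)
  case Nil thus ?case by simp
next
  case (Cons x xs)
  show ?case
  proof (cases "x = w")
    case True
    have "count_list xs w \<ge> 1 \<longleftrightarrow> w \<in> set xs"
      by (metis One_nat_def Suc_leI count_list_0_iff not_gr_zero not_one_le_zero)
    moreover have "subseq [w,w] (w#xs) \<longleftrightarrow> subseq [w] xs"
      by simp
    ultimately show ?thesis using True by (auto simp: subseq_singleton_left)
  next
    case False thus ?thesis using Cons by simp
  qed
qed
lemma len3: "length t = 3 \<Longrightarrow> \<exists>a b c. t = [a,b,c]"
  by (auto simp: length_Suc_conv numeral_3_eq_3)

lemma char:
  fixes \<sigma> :: "nat list"
  assumes ne: "\<sigma> \<noteq> []" and av: "avoids \<sigma> {[0,1,0], [1,1,0]}"
  defines "M \<equiv> Suc (Max (set \<sigma>))"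
  shows "(\<exists>p\<in>{[0,1,0], [1,1,0]}. contains (\<sigma>@[M,v]) p) \<longleftrightarrow>
         v \<in> set \<sigma> \<or> (\<exists>w. count_list \<sigma> w \<ge> 2 \<and> v < w)"
proof
  have leM: "x < M" if "x \<in> set \<sigma>" for x
    using that unfolding M_def by (simp add: le_imp_less_Suc)
  assume "\<exists>p\<in>{[0,1,0], [1,1,0]}. contains (\<sigma>@[M,v]) p"
  then obtain p t where p: "p \<in> {[0,1,0], [1,1,0]}" and st: "subseq t (\<sigma>@[M,v])" and io: "order_iso t p"
    unfolding contains_def by blast
  have "length t = 3" using iso_len[OF io] p by auto
  then obtain a b c where t: "t = [a,b,c]" using len3 by blast
  obtain t1 t2 where tt: "t = t1@t2" and s1: "subseq t1 \<sigma>" and s2: "subseq t2 [M,v]"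
    using st subseq_append_iff by blast
  have nc: "\<not> contains \<sigma> p" using av p unfolding avoids_def by blast
  from subseq2[OF s2] show "v \<in> set \<sigma> \<or> (\<exists>w. count_list \<sigma> w \<ge> 2 \<and> v < w)"
  proof (elim disjE)
    assume "t2 = []"
    hence "subseq t \<sigma>" using tt s1 by simp
    hence "contains \<sigma> p" using io unfolding contains_def by blast
    thus ?thesis using nc by blast
  next
    assume h: "t2 = [M]"
    hence "t1 = [a,b]" "c = M" using tt t by auto
    hence "a \<in> set \<sigma>" using subseq_set[OF s1] by auto
    hence "a < M" by (rule leM)
    thus ?thesis using p io t \<open>c = M\<close> iso010 iso110 by auto
  next
    assume h: "t2 = [v]"
    hence t1: "t1 = [a,b]" "c = v" using tt t by auto
    hence "a \<in> set \<sigma>" using subseq_set[OF s1] by auto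
    show ?thesis
    proof (cases "p = [0,1,0]")
      case True thus ?thesis using io t t1 \<open>a \<in> set \<sigma>\<close> iso010 by auto
    next
      case False
      hence "a = b" "v < a" using p io t t1 iso110 by auto
      moreover have "subseq [a,a] \<sigma>" using s1 t1 \<open>a = b\<close> by simp
      hence "count_list \<sigma> a \<ge> 2" using rep_subseq[of \<sigma> a] by simp
      ultimately show ?thesis by blast
    qed
  next
    assume h: "t2 = [M,v]"
    hence t1: "t1 = [a]" "b = M" "c = v" using tt t by auto
    hence "a \<in> set \<sigma>" using subseq_set[OF s1] by auto
    hence "a < M" by (rule leM)
    thus ?thesis using p io t t1 \<open>a \<in> set \<sigma>\<close> iso010 iso110 by auto
  qed
next
  have leM: "x < M" if "x \<in> set \<sigma>" for x
    using that unfolding M_def by (simp add: le_imp_less_Suc)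
  assume "v \<in> set \<sigma> \<or> (\<exists>w. count_list \<sigma> w \<ge> 2 \<and> v < w)"
  thus "\<exists>p\<in>{[0,1,0], [1,1,0]}. contains (\<sigma>@[M,v]) p"
  proof
    assume v: "v \<in> set \<sigma>"
    have "subseq ([v]@[M,v]) (\<sigma>@[M,v])"
      by (rule list_emb_append_mono) (simp_all add: v subseq_singleton_left)
    hence "subseq [v,M,v] (\<sigma>@[M,v])" by simp
    moreover have "order_iso [v,M,v] [0,1,0]" using iso010 leM[OF v] by auto
    ultimately show ?thesis unfolding contains_def by blast
  next
    assume "\<exists>w. count_list \<sigma> w \<ge> 2 \<and> v < w"
    then obtain w where w0: "count_list \<sigma> w \<ge> 2" "v < w" by blast
    have w: "subseq [w,w] \<sigma>" "v < w" using w0 rep_subseq[of \<sigma> w] by simp_all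
    have "subseq ([w,w]@[v]) (\<sigma>@[M,v])"
      by (rule list_emb_append_mono) (simp_all add: w)
    hence "subseq [w,w,v] (\<sigma>@[M,v])" by simp
    moreover have "order_iso [w,w,v] [1,1,0]" using iso110 w by auto
    ultimately show ?thesis unfolding contains_def by blast
  qed
qed

theorem mainTheorem11:
  fixes \<sigma> :: "nat list"
  assumes "\<sigma> \<noteq> []"
    and "avoids \<sigma> {[0,1,0], [1,1,0]}"
  shows "forb \<sigma> {[0,1,0], [1,1,0]} =
         max_repeated \<sigma> + card {v \<in> set \<sigma>. v \<ge> max_repeated \<sigma>}"
proof -
  define q where "q = max_repeated \<sigma>"
  define R where "R = {v. count_list \<sigma> v \<ge> 2}"
  have RS: "R \<subseteq> set \<sigma>"
  proof
    fix x assume "x \<in> R"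
    hence "count_list \<sigma> x \<noteq> 0" unfolding R_def by auto
    thus "x \<in> set \<sigma>" using count_list_0_iff by metis
  qed
  have fR: "finite R" using RS finite_subset by blast
  have qR: "(\<exists>w. count_list \<sigma> w \<ge> 2 \<and> v < w) \<longleftrightarrow> v < q" for v
  proof (cases "R = {}")
    case True
    hence "\<not> (\<exists>v. count_list \<sigma> v \<ge> 2)" unfolding R_def by auto
    thus ?thesis using True unfolding q_def max_repeated_def R_def by auto
  next
    case False
    hence "\<exists>v. count_list \<sigma> v \<ge> 2" unfolding R_def by auto
    hence "q = Max R" unfolding q_def max_repeated_def R_def by simp
    thus ?thesis using Max_gr_iff[OF fR False, of v] unfolding R_def by auto
  qed
  have qle: "v < q \<Longrightarrow> v \<le> Max (set \<sigma>)" for v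
  proof -
    assume "v < q"
    then obtain w where "count_list \<sigma> w \<ge> 2" "v < w" using qR by blast
    hence "w \<in> set \<sigma>" using RS unfolding R_def by auto
    thus ?thesis using \<open>v < w\<close> by (meson Max_ge finite_set le_trans less_imp_le)
  qed
  have F: "forbidden \<sigma> {[0,1,0], [1,1,0]} = {..<q} \<union> {v \<in> set \<sigma>. v \<ge> q}"
  proof -
    have "forbidden \<sigma> {[0,1,0], [1,1,0]} =
      {v. v \<le> Max (set \<sigma>) \<and> (v \<in> set \<sigma> \<or> (\<exists>w. count_list \<sigma> w \<ge> 2 \<and> v < w))}"
      unfolding forbidden_def using char[OF assms] by simp
    also have "\<dots> = {..<q} \<union> {v \<in> set \<sigma>. v \<ge> q}"
      using qR qle by (auto simp: not_less)
    finally show ?thesis .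
  qed
  have "card ({..<q} \<union> {v \<in> set \<sigma>. v \<ge> q}) = card {..<q} + card {v \<in> set \<sigma>. v \<ge> q}"
    by (rule card_Un_disjoint) auto
  thus ?thesis unfolding forb_def F q_def by simp
qed

end
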